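(* Fix $N=\{1,\dots,n\}$ and a cost function $C:2^N\to\mathbb{R}_{\ge0}$ with $C(\emptyset)=0$. Consider maps assigning to each probability distribution $\mathcal{D}$ over $2^N$ a vector $\phi^{\mathcal{D}}\in\mathbb{R}^n$. Among such maps, the data-dependent Shapley value $$\phi^{\mathcal{D}}_i=\sum_{S\subseteq N:\, i\in S}\Pr[S\sim\mathcal{D}]\cdot\frac{C(S)}{|S|}$$ is the unique one satisfying the following four axioms: (Balance) $\sum_{i\in N}\phi^{\mathcal{D}}_i=\mathbb{E}_{S\sim\mathcal{D}}[C(S)]$ for all $\mathcal{D}$; (Symmetry) for all $\mathcal{D}$ and all $i,j$, if $\Pr_{S\sim\mathcal{D}}[|S\cap\{i,j\}|=1]=0$ then $\phi^{\mathcal{D}}_i=\phi^{\mathcal{D}}_j$; (Zero element) for all $\mathcal{D}$ and all $i$, if $\Pr_{S\sim\mathcal{D}}[i\in S]=0$ then $\phi^{\mathcal{D}}_i=0$; (Additivity) for all $i$, all distributions $\mathcal{D}_1,\mathcal{D}_2$ and all $\alpha,\beta\ge0$ with $\alpha+\beta=1$, $\phi^{\alpha\mathcal{D}_1+\beta\mathcal{D}_2}_i=\alpha\phi^{\mathcal{D}_1}_i+\beta\phi^{\mathcal{D}_2}_i$, where $\alpha\mathcal{D}_1+\beta\mathcal{D}_2$ is the mixture with $\Pr[S\sim\alpha\mathcal{D}_1+\beta\mathcal{D}_2]=\alpha\Pr[S\sim\mathcal{D}_1]+\beta\Pr[S\sim\mathcal{D}_2]$. *)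

theory Defs
  imports Main Complex_Main
begin

text \<open>Ground set N = {1..n}. A probability distribution over 2^N is represented by its
 probability mass function p :: nat set => real, supported on subsets of N.\<close>

definition ground :: "nat \<Rightarrow> nat set" where
  "ground n = {1..n}"

definition is_dist :: "nat \<Rightarrow> (nat set \<Rightarrow> real) \<Rightarrow> bool" where
  "is_dist n p \<longleftrightarrow> (\<forall>S. 0 \<le> p S) \<and> (\<forall>S. \<not> S \<subseteq> ground n \<longrightarrow> p S = 0)
     \<and> (\<Sum>S\<in>Pow (ground n). p S) = 1"

definition prob_ev :: "nat \<Rightarrow> (nat set \<Rightarrow> real) \<Rightarrow> (nat set \<Rightarrow> bool) \<Rightarrow> real" where
  "prob_ev n p P = (\<Sum>S\<in>{S\<in>Pow (ground n). P S}. p S)"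

definition expect :: "nat \<Rightarrow> (nat set \<Rightarrow> real) \<Rightarrow> (nat set \<Rightarrow> real) \<Rightarrow> real" where
  "expect n p C = (\<Sum>S\<in>Pow (ground n). p S * C S)"

definition mixture :: "real \<Rightarrow> (nat set \<Rightarrow> real) \<Rightarrow> real \<Rightarrow> (nat set \<Rightarrow> real) \<Rightarrow> (nat set \<Rightarrow> real)" where
  "mixture a p b q = (\<lambda>S. a * p S + b * q S)"

definition dd_shapley :: "nat \<Rightarrow> (nat set \<Rightarrow> real) \<Rightarrow> (nat set \<Rightarrow> real) \<Rightarrow> nat \<Rightarrow> real" where
  "dd_shapley n C p i = (\<Sum>S\<in>{S\<in>Pow (ground n). i \<in> S}. p S * (C S / real (card S)))"

definition balance :: "nat \<Rightarrow> (nat set \<Rightarrow> real) \<Rightarrow> ((nat set \<Rightarrow> real) \<Rightarrow> nat \<Rightarrow> real) \<Rightarrow> bool" where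
  "balance n C \<phi> \<longleftrightarrow> (\<forall>p. is_dist n p \<longrightarrow> (\<Sum>i\<in>ground n. \<phi> p i) = expect n p C)"

definition symmetry :: "nat \<Rightarrow> ((nat set \<Rightarrow> real) \<Rightarrow> nat \<Rightarrow> real) \<Rightarrow> bool" where
  "symmetry n \<phi> \<longleftrightarrow> (\<forall>p i j. is_dist n p \<longrightarrow> i \<in> ground n \<longrightarrow> j \<in> ground n \<longrightarrow>
      prob_ev n p (\<lambda>S. card (S \<inter> {i, j}) = 1) = 0 \<longrightarrow> \<phi> p i = \<phi> p j)"

definition zero_element :: "nat \<Rightarrow> ((nat set \<Rightarrow> real) \<Rightarrow> nat \<Rightarrow> real) \<Rightarrow> bool" where
  "zero_element n \<phi> \<longleftrightarrow> (\<forall>p i. is_dist n p \<longrightarrow> i \<in> ground n \<longrightarrow>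
      prob_ev n p (\<lambda>S. i \<in> S) = 0 \<longrightarrow> \<phi> p i = 0)"

definition additivity :: "nat \<Rightarrow> ((nat set \<Rightarrow> real) \<Rightarrow> nat \<Rightarrow> real) \<Rightarrow> bool" where
  "additivity n \<phi> \<longleftrightarrow> (\<forall>i p q a b. i \<in> ground n \<longrightarrow> is_dist n p \<longrightarrow> is_dist n q \<longrightarrow>
      0 \<le> a \<longrightarrow> 0 \<le> b \<longrightarrow> a + b = 1 \<longrightarrow>
      \<phi> (mixture a p b q) i = a * \<phi> p i + b * \<phi> q i)"

end

theory Submission
  imports Defs
begin

definition delta :: "nat set \<Rightarrow> nat set \<Rightarrow> real" where
  "delta S0 = (\<lambda>S. if S = S0 then 1 else 0)"

lemma fin_ground[simp]: "finite (ground n)" by (simp add: ground_def)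

lemma sum_delta_gen: "finite A \<Longrightarrow> (\<Sum>S\<in>A. delta S0 S * f S) = (if S0 \<in> A then f S0 else 0)"
proof -
  assume "finite A"
  have "(\<Sum>S\<in>A. delta S0 S * f S) = (\<Sum>S\<in>A. if S = S0 then f S0 else 0)"
    by (rule sum.cong) (auto simp: delta_def)
  also have "\<dots> = (if S0 \<in> A then f S0 else 0)" using \<open>finite A\<close> by (simp add: sum.delta')
  finally show ?thesis .
qed

lemma dist_delta: "S0 \<subseteq> ground n \<Longrightarrow> is_dist n (delta S0)"
  unfolding is_dist_def by (auto simp: delta_def)

lemma prob_delta: "S0 \<subseteq> ground n \<Longrightarrow> prob_ev n (delta S0) P = (if P S0 then 1 else 0)"
  unfolding prob_ev_def using sum_delta_gen[of "{S \<in> Pow (ground n). P S}" S0 "\<lambda>_. 1"] by simp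

lemma expect_delta: "S0 \<subseteq> ground n \<Longrightarrow> expect n (delta S0) C = C S0"
  unfolding expect_def using sum_delta_gen[of "Pow (ground n)" S0 C] by simp

lemma dd_delta: "S0 \<subseteq> ground n \<Longrightarrow> dd_shapley n C (delta S0) i = (if i \<in> S0 then C S0 / card S0 else 0)"
  unfolding dd_shapley_def using sum_delta_gen[of "{S \<in> Pow (ground n). i \<in> S}" S0 "\<lambda>S. C S / card S"] by simp

lemma dd_mix: "dd_shapley n C (mixture a p b q) i = a * dd_shapley n C p i + b * dd_shapley n C q i"
  unfolding dd_shapley_def mixture_def
  by (simp add: sum_distrib_left sum.distrib algebra_simps)

lemma dist_mix:
  assumes "is_dist n p" "is_dist n q" "0 \<le> a" "0 \<le> b" "a + b = 1"
  shows "is_dist n (mixture a p b q)"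
  using assms unfolding is_dist_def mixture_def
  by (auto simp: sum.distrib sum_distrib_left[symmetric])

lemma dd_alt: "dd_shapley n C p i = (\<Sum>S\<in>Pow (ground n). if i \<in> S then p S * (C S / real (card S)) else 0)"
  unfolding dd_shapley_def by (simp add: sum.inter_filter[symmetric])

lemma dd_balance:
  assumes C0: "C {} = 0"
  shows "(\<Sum>i\<in>ground n. dd_shapley n C p i) = expect n p C"
proof -
  have "(\<Sum>i\<in>ground n. dd_shapley n C p i)
      = (\<Sum>S\<in>Pow (ground n). \<Sum>i\<in>ground n. if i \<in> S then p S * (C S / real (card S)) else 0)"
    unfolding dd_alt by (rule sum.swap)
  also have "\<dots> = (\<Sum>S\<in>Pow (ground n). p S * C S)"
  proof (rule sum.cong)
    fix S assume S: "S \<in> Pow (ground n)"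
    hence fS: "finite S" by (meson PowD fin_ground finite_subset)
    have eq: "S \<inter> ground n = S" using S by auto
    have "(\<Sum>i\<in>ground n. if i \<in> S then p S * (C S / real (card S)) else 0)
        = real (card S) * (p S * (C S / real (card S)))"
      by (simp add: sum.If_cases eq Int_commute)
    also have "\<dots> = p S * C S"
    proof (cases "S = {}")
      case True thus ?thesis using C0 by simp
    next
      case False thus ?thesis using fS by simp
    qed
    finally show "(\<Sum>i\<in>ground n. if i \<in> S then p S * (C S / real (card S)) else 0) = p S * C S" .
  qed simp
  finally show ?thesis unfolding expect_def .
qed

lemma zero_terms:
  assumes "is_dist n p" "prob_ev n p P = 0" "S \<subseteq> ground n" "P S"
  shows "p S = 0"
proof -
  have "\<forall>S\<in>{S \<in> Pow (ground n). P S}. p S = 0"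
    using assms(1,2) unfolding prob_ev_def is_dist_def
    by (subst sum_nonneg_eq_0_iff[symmetric]) auto
  thus ?thesis using assms(3,4) by auto
qed

lemma dd_zero:
  assumes "is_dist n p" "prob_ev n p (\<lambda>S. i \<in> S) = 0"
  shows "dd_shapley n C p i = 0"
  unfolding dd_shapley_def
  by (rule sum.neutral) (use zero_terms[OF assms] in auto)

lemma dd_sym:
  assumes "is_dist n p" "prob_ev n p (\<lambda>S. card (S \<inter> {i, j}) = 1) = 0"
  shows "dd_shapley n C p i = dd_shapley n C p j"
proof (cases "i = j")
  case False
  show ?thesis unfolding dd_alt
  proof (rule sum.cong)
    fix S assume S: "S \<in> Pow (ground n)"
    show "(if i \<in> S then p S * (C S / real (card S)) else 0) = (if j \<in> S then p S * (C S / real (card S)) else 0)"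
    proof (cases "card (S \<inter> {i, j}) = 1")
      case True thus ?thesis using zero_terms[OF assms, of S] S by auto
    next
      case c: False
      have "i \<in> S \<longleftrightarrow> j \<in> S"
      proof
        assume "i \<in> S" show "j \<in> S"
        proof (rule ccontr)
          assume "j \<notin> S" hence "S \<inter> {i, j} = {i}" using \<open>i \<in> S\<close> by auto
          thus False using c by simp
        qed
      next
        assume "j \<in> S" show "i \<in> S"
        proof (rule ccontr)
          assume "i \<notin> S" hence "S \<inter> {i, j} = {j}" using \<open>j \<in> S\<close> by auto
          thus False using c by simp
        qed
      qed
      thus ?thesis by simp
    qed
  qed simp
qed simp

lemma phi_delta:
  assumes B: "balance n C \<phi>" and Sy: "symmetry n \<phi>" and Z: "zero_element n \<phi>"
    and S0: "S0 \<subseteq> ground n" and i: "i \<in> ground n"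
  shows "\<phi> (delta S0) i = dd_shapley n C (delta S0) i"
proof (cases "i \<in> S0")
  case False
  have "\<phi> (delta S0) i = 0"
    using Z i False dist_delta[OF S0] prob_delta[OF S0] unfolding zero_element_def by auto
  thus ?thesis using False dd_delta[OF S0] by simp
next
  case True
  have fS: "finite S0" using S0 finite_subset fin_ground by blast
  have eqj: "\<phi> (delta S0) j = \<phi> (delta S0) i" if j: "j \<in> S0" for j
  proof (cases "j = i")
    case False
    have "card (S0 \<inter> {j, i}) = 2" using j True False by (simp add: Int_absorb1)
    hence "prob_ev n (delta S0) (\<lambda>S. card (S \<inter> {j, i}) = 1) = 0" using prob_delta[OF S0] by simp
    thus ?thesis using Sy dist_delta[OF S0] i j S0 unfolding symmetry_def by blast
  qed simp
  have z: "\<phi> (delta S0) j = 0" if "j \<in> ground n - S0" for j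
    using Z that dist_delta[OF S0] prob_delta[OF S0] unfolding zero_element_def by auto
  have "C S0 = (\<Sum>j\<in>ground n. \<phi> (delta S0) j)"
    using B dist_delta[OF S0] expect_delta[OF S0] unfolding balance_def by simp
  also have "\<dots> = (\<Sum>j\<in>S0. \<phi> (delta S0) j) + (\<Sum>j\<in>ground n - S0. \<phi> (delta S0) j)"
    using S0 by (metis fin_ground sum.subset_diff add.commute)
  also have "\<dots> = real (card S0) * \<phi> (delta S0) i"
    using eqj z by simp
  finally have "\<phi> (delta S0) i = C S0 / real (card S0)"
    using True fS by (auto simp: field_simps card_gt_0_iff)
  thus ?thesis using True dd_delta[OF S0] by simp
qed

lemma uniq_ind:
  assumes B: "balance n C \<phi>" and Sy: "symmetry n \<phi>" and Z: "zero_element n \<phi>"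
    and A: "additivity n \<phi>" and F: "finite F"
  shows "\<forall>p. is_dist n p \<longrightarrow> (\<forall>S. S \<notin> F \<longrightarrow> p S = 0) \<longrightarrow> (\<forall>i\<in>ground n. \<phi> p i = dd_shapley n C p i)"
  using F
proof (induction F rule: finite_induct)
  case empty
  show ?case
  proof (intro allI impI)
    fix p assume "is_dist n p" "\<forall>S. S \<notin> {} \<longrightarrow> p S = 0"
    thus "\<forall>i\<in>ground n. \<phi> p i = dd_shapley n C p i" unfolding is_dist_def by simp
  qed
next
  case (insert S0 F)
  show ?case
  proof (intro allI impI ballI)
    fix p i assume p: "is_dist n p" and sup: "\<forall>S. S \<notin> insert S0 F \<longrightarrow> p S = 0" and i: "i \<in> ground n"
    have nn: "\<And>S. 0 \<le> p S" and out: "\<And>S. \<not> S \<subseteq> ground n \<Longrightarrow> p S = 0"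
      and tot: "(\<Sum>S\<in>Pow (ground n). p S) = 1" using p unfolding is_dist_def by auto
    show "\<phi> p i = dd_shapley n C p i"
    proof (cases "S0 \<subseteq> ground n")
      case False
      hence "p S0 = 0" using out by blast
      hence "\<forall>S. S \<notin> F \<longrightarrow> p S = 0" using sup by auto
      thus ?thesis using insert.IH p i by blast
    next
      case S0: True
      have S0P: "S0 \<in> Pow (ground n)" using S0 by simp
      have split: "(\<Sum>S\<in>Pow (ground n). p S) = p S0 + (\<Sum>S\<in>Pow (ground n) - {S0}. p S)"
        using S0P by (simp add: sum.remove)
      have rest_nn: "0 \<le> (\<Sum>S\<in>Pow (ground n) - {S0}. p S)" by (simp add: sum_nonneg nn)
      show ?thesis
      proof (cases "p S0 = 1")
        case True
        have "(\<Sum>S\<in>Pow (ground n) - {S0}. p S) = 0" using split tot True by simp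
        hence "\<forall>S\<in>Pow (ground n) - {S0}. p S = 0"
          by (subst sum_nonneg_eq_0_iff[symmetric]) (auto simp: nn)
        note z0 = this
        have "p S = delta S0 S" for S
        proof (cases "S \<subseteq> ground n")
          case True thus ?thesis using z0 \<open>p S0 = 1\<close> unfolding delta_def by auto
        next
          case False thus ?thesis using out S0 unfolding delta_def by auto
        qed
        hence "p = delta S0" by (rule ext)
        thus ?thesis using phi_delta[OF B Sy Z S0 i] by simp
      next
        case False
        have lt: "p S0 < 1" using split tot rest_nn False by linarith
        define q where "q = (\<lambda>S. if S = S0 then 0 else p S / (1 - p S0))"
        have qd: "is_dist n q"
          unfolding is_dist_def
        proof (intro conjI allI impI)
          fix S show "0 \<le> q S" using nn lt unfolding q_def by auto
        next
          fix S assume "\<not> S \<subseteq> ground n" thus "q S = 0" using out unfolding q_def by auto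
        next
          have "(\<Sum>S\<in>Pow (ground n). q S) = q S0 + (\<Sum>S\<in>Pow (ground n) - {S0}. q S)"
            using S0P by (simp add: sum.remove)
          also have "\<dots> = (\<Sum>S\<in>Pow (ground n) - {S0}. p S / (1 - p S0))"
            unfolding q_def by simp
          also have "\<dots> = (\<Sum>S\<in>Pow (ground n) - {S0}. p S) / (1 - p S0)"
            by (simp add: sum_divide_distrib)
          also have "\<dots> = 1" using split tot lt by simp
          finally show "(\<Sum>S\<in>Pow (ground n). q S) = 1" .
        qed
        have qs: "\<forall>S. S \<notin> F \<longrightarrow> q S = 0" using sup unfolding q_def by auto
        have IHq: "\<phi> q i = dd_shapley n C q i" using insert.IH qd qs i by blast
        have pm: "p = mixture (p S0) (delta S0) (1 - p S0) q"
          unfolding mixture_def delta_def q_def using lt by (auto intro!: ext)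
        have "\<phi> p i = p S0 * \<phi> (delta S0) i + (1 - p S0) * \<phi> q i"
          using A i dist_delta[OF S0] qd nn lt unfolding additivity_def
          by (subst pm) (auto simp del: mixture_def)
        also have "\<dots> = p S0 * dd_shapley n C (delta S0) i + (1 - p S0) * dd_shapley n C q i"
          using phi_delta[OF B Sy Z S0 i] IHq by simp
        also have "\<dots> = dd_shapley n C p i" by (subst (3) pm) (simp add: dd_mix)
        finally show ?thesis .
      qed
    qed
  qed
qed

theorem theorem10:
  fixes n :: nat and C :: "nat set \<Rightarrow> real"
  assumes "\<forall>S\<subseteq>ground n. 0 \<le> C S"
    and "C {} = 0"
  shows "\<forall>\<phi> :: (nat set \<Rightarrow> real) \<Rightarrow> nat \<Rightarrow> real.
           (balance n C \<phi> \<and> symmetry n \<phi> \<and> zero_element n \<phi> \<and> additivity n \<phi>)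
           \<longleftrightarrow> (\<forall>p i. is_dist n p \<longrightarrow> i \<in> ground n \<longrightarrow> \<phi> p i = dd_shapley n C p i)"
proof (rule allI, rule iffI)
  fix \<phi> :: "(nat set \<Rightarrow> real) \<Rightarrow> nat \<Rightarrow> real"
  assume "balance n C \<phi> \<and> symmetry n \<phi> \<and> zero_element n \<phi> \<and> additivity n \<phi>"
  hence ax: "balance n C \<phi>" "symmetry n \<phi>" "zero_element n \<phi>" "additivity n \<phi>" by auto
  have fP: "finite (Pow (ground n))" by simp
  have H: "\<forall>p. is_dist n p \<longrightarrow> (\<forall>S. S \<notin> Pow (ground n) \<longrightarrow> p S = 0) \<longrightarrow> (\<forall>i\<in>ground n. \<phi> p i = dd_shapley n C p i)"
    by (rule uniq_ind[OF ax fP])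
  show "\<forall>p i. is_dist n p \<longrightarrow> i \<in> ground n \<longrightarrow> \<phi> p i = dd_shapley n C p i"
  proof (intro allI impI)
    fix p i assume p: "is_dist n p" and i: "i \<in> ground n"
    have "\<forall>S. S \<notin> Pow (ground n) \<longrightarrow> p S = 0" using p unfolding is_dist_def by auto
    thus "\<phi> p i = dd_shapley n C p i" using H p i by blast
  qed
next
  fix \<phi> :: "(nat set \<Rightarrow> real) \<Rightarrow> nat \<Rightarrow> real"
  assume E: "\<forall>p i. is_dist n p \<longrightarrow> i \<in> ground n \<longrightarrow> \<phi> p i = dd_shapley n C p i"
  have "balance n C \<phi>" unfolding balance_def
  proof (intro allI impI)
    fix p assume p: "is_dist n p"
    have "(\<Sum>i\<in>ground n. \<phi> p i) = (\<Sum>i\<in>ground n. dd_shapley n C p i)"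
      using E p by (intro sum.cong) auto
    thus "(\<Sum>i\<in>ground n. \<phi> p i) = expect n p C" using dd_balance[of C n p, OF assms(2)] by simp
  qed
  moreover have "symmetry n \<phi>" unfolding symmetry_def using E dd_sym by metis
  moreover have "zero_element n \<phi>" unfolding zero_element_def using E dd_zero by metis
  moreover have "additivity n \<phi>" unfolding additivity_def
    using E dist_mix dd_mix by metis
  ultimately show "balance n C \<phi> \<and> symmetry n \<phi> \<and> zero_element n \<phi> \<and> additivity n \<phi>" by blast
qed

end
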